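(* In a pointed protomodular category, for an object $X$: if $X$ is strong-complete then it is complete${}^*$; if it is complete${}^*$ then it is complete; and if it is complete then it is proto-complete.
   Context: A pointed category with finite limits is protomodular if the split short five lemma holds. A normal monomorphism is a kernel of some morphism; a protosplit monomorphism is a kernel of a split epimorphism. A monomorphism $m:S\to Y$ is Bourn-normal if there is an equivalence relation $(R,r_1,r_2)$ on $Y$ and a morphism $\tilde m:S\times S\to R$ with $r_1\tilde m=m\pi_1$, $r_2\tilde m=m\pi_2$ such that the square $r_1\tilde m=m\pi_1$ is a pullback. An object $X$ is: proto-complete if every protosplit monomorphism with domain $X$ is a split monomorphism; complete if every normal monomorphism with domain $X$ is a split monomorphism; complete${}^*$ if every Bourn-normal monomorphism with domain $X$ is a split monomorphism; strong-complete if every protosplit monomorphism with domain $X$ is a split monomorphism with a unique retraction. *)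

theory Defs
  imports Main
begin

text \<open>Categories presented explicitly by objects, arrows, domain, codomain,
  identities and composition. Comp C g f is the composite g after f.\<close>

record ('o, 'a) cat =
  Obj  :: "'o set"
  Arr  :: "'a set"
  Dom  :: "'a \<Rightarrow> 'o"
  Cod  :: "'a \<Rightarrow> 'o"
  Idm  :: "'o \<Rightarrow> 'a"
  Comp :: "'a \<Rightarrow> 'a \<Rightarrow> 'a"

definition hom :: "('o, 'a) cat \<Rightarrow> 'o \<Rightarrow> 'o \<Rightarrow> 'a set" where
  "hom C X Y = {f \<in> Arr C. Dom C f = X \<and> Cod C f = Y}"

definition category :: "('o, 'a) cat \<Rightarrow> bool" where
  "category C \<longleftrightarrow>
     (\<forall>f \<in> Arr C. Dom C f \<in> Obj C \<and> Cod C f \<in> Obj C) \<and>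
     (\<forall>X \<in> Obj C. Idm C X \<in> hom C X X) \<and>
     (\<forall>f \<in> Arr C. \<forall>g \<in> Arr C. Cod C f = Dom C g \<longrightarrow>
        Comp C g f \<in> hom C (Dom C f) (Cod C g)) \<and>
     (\<forall>f \<in> Arr C. Comp C (Idm C (Cod C f)) f = f \<and> Comp C f (Idm C (Dom C f)) = f) \<and>
     (\<forall>f \<in> Arr C. \<forall>g \<in> Arr C. \<forall>h \<in> Arr C. Cod C f = Dom C g \<and> Cod C g = Dom C h \<longrightarrow>
        Comp C h (Comp C g f) = Comp C (Comp C h g) f)"

definition iso :: "('o, 'a) cat \<Rightarrow> 'a \<Rightarrow> bool" where
  "iso C f \<longleftrightarrow> f \<in> Arr C \<and>
     (\<exists>g \<in> hom C (Cod C f) (Dom C f).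
        Comp C g f = Idm C (Dom C f) \<and> Comp C f g = Idm C (Cod C f))"

definition mono :: "('o, 'a) cat \<Rightarrow> 'a \<Rightarrow> bool" where
  "mono C m \<longleftrightarrow> m \<in> Arr C \<and>
     (\<forall>f \<in> Arr C. \<forall>g \<in> Arr C. Cod C f = Dom C m \<and> Cod C g = Dom C m \<and> Dom C f = Dom C g
        \<and> Comp C m f = Comp C m g \<longrightarrow> f = g)"

definition split_mono :: "('o, 'a) cat \<Rightarrow> 'a \<Rightarrow> bool" where
  "split_mono C m \<longleftrightarrow> m \<in> Arr C \<and>
     (\<exists>r \<in> hom C (Cod C m) (Dom C m). Comp C r m = Idm C (Dom C m))"

definition split_epi :: "('o, 'a) cat \<Rightarrow> 'a \<Rightarrow> bool" where
  "split_epi C p \<longleftrightarrow> p \<in> Arr C \<and>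
     (\<exists>s \<in> hom C (Cod C p) (Dom C p). Comp C p s = Idm C (Cod C p))"

definition terminal_obj :: "('o, 'a) cat \<Rightarrow> 'o \<Rightarrow> bool" where
  "terminal_obj C T \<longleftrightarrow> T \<in> Obj C \<and> (\<forall>A \<in> Obj C. \<exists>!f. f \<in> hom C A T)"

definition initial_obj :: "('o, 'a) cat \<Rightarrow> 'o \<Rightarrow> bool" where
  "initial_obj C I \<longleftrightarrow> I \<in> Obj C \<and> (\<forall>A \<in> Obj C. \<exists>!f. f \<in> hom C I A)"

definition zero_obj :: "('o, 'a) cat \<Rightarrow> 'o \<Rightarrow> bool" where
  "zero_obj C Z \<longleftrightarrow> initial_obj C Z \<and> terminal_obj C Z"

definition pointed :: "('o, 'a) cat \<Rightarrow> bool" where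
  "pointed C \<longleftrightarrow> (\<exists>Z. zero_obj C Z)"

definition zero_mor :: "('o, 'a) cat \<Rightarrow> 'a \<Rightarrow> bool" where
  "zero_mor C f \<longleftrightarrow> f \<in> Arr C \<and>
     (\<exists>Z g h. zero_obj C Z \<and> g \<in> hom C (Dom C f) Z \<and> h \<in> hom C Z (Cod C f) \<and> f = Comp C h g)"

definition is_pullback :: "('o, 'a) cat \<Rightarrow> 'a \<Rightarrow> 'a \<Rightarrow> 'a \<Rightarrow> 'a \<Rightarrow> bool" where
  "is_pullback C f g p q \<longleftrightarrow>
     f \<in> Arr C \<and> g \<in> Arr C \<and> p \<in> Arr C \<and> q \<in> Arr C \<and>
     Cod C f = Cod C g \<and> Dom C p = Dom C q \<and> Cod C p = Dom C f \<and> Cod C q = Dom C g \<and>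
     Comp C f p = Comp C g q \<and>
     (\<forall>u \<in> Arr C. \<forall>v \<in> Arr C. Dom C u = Dom C v \<and> Cod C u = Dom C f \<and> Cod C v = Dom C g \<and>
        Comp C f u = Comp C g v \<longrightarrow>
        (\<exists>!h. h \<in> hom C (Dom C u) (Dom C p) \<and> Comp C p h = u \<and> Comp C q h = v))"

definition is_product :: "('o, 'a) cat \<Rightarrow> 'o \<Rightarrow> 'o \<Rightarrow> 'a \<Rightarrow> 'a \<Rightarrow> bool" where
  "is_product C A B p q \<longleftrightarrow>
     A \<in> Obj C \<and> B \<in> Obj C \<and> p \<in> Arr C \<and> q \<in> Arr C \<and>
     Dom C p = Dom C q \<and> Cod C p = A \<and> Cod C q = B \<and>
     (\<forall>u \<in> Arr C. \<forall>v \<in> Arr C. Dom C u = Dom C v \<and> Cod C u = A \<and> Cod C v = B \<longrightarrow>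
        (\<exists>!h. h \<in> hom C (Dom C u) (Dom C p) \<and> Comp C p h = u \<and> Comp C q h = v))"

text \<open>Finite limits: a terminal object and all pullbacks (equivalently, all finite limits).\<close>
definition has_finite_limits :: "('o, 'a) cat \<Rightarrow> bool" where
  "has_finite_limits C \<longleftrightarrow> (\<exists>T. terminal_obj C T) \<and>
     (\<forall>f \<in> Arr C. \<forall>g \<in> Arr C. Cod C f = Cod C g \<longrightarrow> (\<exists>p q. is_pullback C f g p q))"

definition is_kernel :: "('o, 'a) cat \<Rightarrow> 'a \<Rightarrow> 'a \<Rightarrow> bool" where
  "is_kernel C k f \<longleftrightarrow> k \<in> Arr C \<and> f \<in> Arr C \<and> Cod C k = Dom C f \<and>
     zero_mor C (Comp C f k) \<and>
     (\<forall>g \<in> Arr C. Cod C g = Dom C f \<and> zero_mor C (Comp C f g) \<longrightarrow>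
        (\<exists>!h. h \<in> hom C (Dom C g) (Dom C k) \<and> Comp C k h = g))"

definition split_ext :: "('o, 'a) cat \<Rightarrow> 'a \<Rightarrow> 'a \<Rightarrow> 'a \<Rightarrow> bool" where
  "split_ext C k p s \<longleftrightarrow> is_kernel C k p \<and> s \<in> hom C (Cod C p) (Dom C p) \<and>
     Comp C p s = Idm C (Cod C p)"

text \<open>Pointed protomodularity: the split short five lemma.\<close>
definition protomodular :: "('o, 'a) cat \<Rightarrow> bool" where
  "protomodular C \<longleftrightarrow>
     (\<forall>k p s k' p' s' u v w.
        split_ext C k p s \<and> split_ext C k' p' s' \<and>
        u \<in> hom C (Dom C k) (Dom C k') \<and> v \<in> hom C (Dom C p) (Dom C p') \<and>
        w \<in> hom C (Cod C p) (Cod C p') \<and>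
        Comp C v k = Comp C k' u \<and> Comp C p' v = Comp C w p \<and> Comp C v s = Comp C s' w \<and>
        iso C u \<and> iso C w \<longrightarrow> iso C v)"

definition normal_mono :: "('o, 'a) cat \<Rightarrow> 'a \<Rightarrow> bool" where
  "normal_mono C m \<longleftrightarrow> (\<exists>f. is_kernel C m f)"

definition protosplit_mono :: "('o, 'a) cat \<Rightarrow> 'a \<Rightarrow> bool" where
  "protosplit_mono C m \<longleftrightarrow> (\<exists>p. split_epi C p \<and> is_kernel C m p)"

definition equiv_rel :: "('o, 'a) cat \<Rightarrow> 'o \<Rightarrow> 'o \<Rightarrow> 'a \<Rightarrow> 'a \<Rightarrow> bool" where
  "equiv_rel C Y R r1 r2 \<longleftrightarrow>
     Y \<in> Obj C \<and> R \<in> Obj C \<and> r1 \<in> hom C R Y \<and> r2 \<in> hom C R Y \<and>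
     (\<comment> \<open>jointly monic\<close>
      \<forall>f \<in> Arr C. \<forall>g \<in> Arr C. Cod C f = R \<and> Cod C g = R \<and> Dom C f = Dom C g \<and>
        Comp C r1 f = Comp C r1 g \<and> Comp C r2 f = Comp C r2 g \<longrightarrow> f = g) \<and>
     (\<comment> \<open>reflexive\<close>
      \<exists>d \<in> hom C Y R. Comp C r1 d = Idm C Y \<and> Comp C r2 d = Idm C Y) \<and>
     (\<comment> \<open>symmetric\<close>
      \<exists>\<sigma> \<in> hom C R R. Comp C r1 \<sigma> = r2 \<and> Comp C r2 \<sigma> = r1) \<and>
     (\<comment> \<open>transitive\<close>
      \<forall>p1 p2. is_pullback C r2 r1 p1 p2 \<longrightarrow>
        (\<exists>\<tau> \<in> hom C (Dom C p1) R. Comp C r1 \<tau> = Comp C r1 p1 \<and> Comp C r2 \<tau> = Comp C r2 p2))"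

definition bourn_normal :: "('o, 'a) cat \<Rightarrow> 'a \<Rightarrow> bool" where
  "bourn_normal C m \<longleftrightarrow> mono C m \<and>
     (\<exists>R r1 r2 \<pi>1 \<pi>2 mt. equiv_rel C (Cod C m) R r1 r2 \<and>
        is_product C (Dom C m) (Dom C m) \<pi>1 \<pi>2 \<and>
        mt \<in> hom C (Dom C \<pi>1) R \<and>
        Comp C r1 mt = Comp C m \<pi>1 \<and> Comp C r2 mt = Comp C m \<pi>2 \<and>
        is_pullback C r1 m mt \<pi>1)"

definition proto_complete :: "('o, 'a) cat \<Rightarrow> 'o \<Rightarrow> bool" where
  "proto_complete C X \<longleftrightarrow>
     (\<forall>m. protosplit_mono C m \<and> Dom C m = X \<longrightarrow> split_mono C m)"

definition complete :: "('o, 'a) cat \<Rightarrow> 'o \<Rightarrow> bool" where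
  "complete C X \<longleftrightarrow>
     (\<forall>m. normal_mono C m \<and> Dom C m = X \<longrightarrow> split_mono C m)"

definition complete_star :: "('o, 'a) cat \<Rightarrow> 'o \<Rightarrow> bool" where
  "complete_star C X \<longleftrightarrow>
     (\<forall>m. bourn_normal C m \<and> Dom C m = X \<longrightarrow> split_mono C m)"

definition strong_complete :: "('o, 'a) cat \<Rightarrow> 'o \<Rightarrow> bool" where
  "strong_complete C X \<longleftrightarrow>
     (\<forall>m. protosplit_mono C m \<and> Dom C m = X \<longrightarrow>
        (\<exists>!r. r \<in> hom C (Cod C m) X \<and> Comp C r m = Idm C X))"

end

theory Submission
  imports Defs
begin

lemma homI: "f \<in> Arr C \<Longrightarrow> Dom C f = A \<Longrightarrow> Cod C f = B \<Longrightarrow> f \<in> hom C A B"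
  by (simp add: hom_def)

lemma homD: "f \<in> hom C A B \<Longrightarrow> f \<in> Arr C \<and> Dom C f = A \<and> Cod C f = B"
  by (simp add: hom_def)

lemma hom_arr: "f \<in> hom C A B \<Longrightarrow> f \<in> Arr C" by (simp add: hom_def)
lemma hom_dom: "f \<in> hom C A B \<Longrightarrow> Dom C f = A" by (simp add: hom_def)
lemma hom_cod: "f \<in> hom C A B \<Longrightarrow> Cod C f = B" by (simp add: hom_def)

lemma arr_hom: "f \<in> Arr C \<Longrightarrow> f \<in> hom C (Dom C f) (Cod C f)" by (simp add: hom_def)

lemma comp_in:
  assumes "category C" "f \<in> hom C A B" "g \<in> hom C B D"
  shows "Comp C g f \<in> hom C A D"
  using assms unfolding category_def hom_def by auto

lemma assoc:
  assumes "category C" "f \<in> hom C A B" "g \<in> hom C B D" "h \<in> hom C D E"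
  shows "Comp C h (Comp C g f) = Comp C (Comp C h g) f"
  using assms unfolding category_def hom_def by auto

lemma id_in: "category C \<Longrightarrow> A \<in> Obj C \<Longrightarrow> Idm C A \<in> hom C A A"
  unfolding category_def by auto

lemma id_left: "category C \<Longrightarrow> f \<in> hom C A B \<Longrightarrow> Comp C (Idm C B) f = f"
  unfolding category_def hom_def by auto

lemma id_right: "category C \<Longrightarrow> f \<in> hom C A B \<Longrightarrow> Comp C f (Idm C A) = f"
  unfolding category_def hom_def by auto

lemma dom_obj: "category C \<Longrightarrow> f \<in> hom C A B \<Longrightarrow> A \<in> Obj C"
  unfolding category_def hom_def by auto

lemma cod_obj: "category C \<Longrightarrow> f \<in> hom C A B \<Longrightarrow> B \<in> Obj C"
  unfolding category_def hom_def by auto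

lemma zero_exists:
  assumes "category C" "pointed C" "A \<in> Obj C" "B \<in> Obj C"
  shows "\<exists>z. z \<in> hom C A B \<and> zero_mor C z"
proof -
  obtain Z where Z: "zero_obj C Z" using assms(2) unfolding pointed_def by auto
  then obtain g where g: "g \<in> hom C A Z" using assms(3) unfolding zero_obj_def terminal_obj_def by blast
  obtain h where h: "h \<in> hom C Z B" using Z assms(4) unfolding zero_obj_def initial_obj_def by blast
  have c: "Comp C h g \<in> hom C A B" using comp_in[OF assms(1) g h] .
  have "zero_mor C (Comp C h g)" unfolding zero_mor_def
    using Z g h c by (auto simp: hom_def)
  thus ?thesis using c by blast
qed

lemma zero_unique:
  assumes C: "category C" and a: "zero_mor C a" and b: "zero_mor C b"
    and ah: "a \<in> hom C A B" and bh: "b \<in> hom C A B"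
  shows "a = b"
proof -
  obtain Z g h where Z: "zero_obj C Z" and g: "g \<in> hom C A Z" and h: "h \<in> hom C Z B"
    and ae: "a = Comp C h g" using a ah unfolding zero_mor_def by (auto simp: hom_def)
  obtain Z' g' h' where Z': "zero_obj C Z'" and g': "g' \<in> hom C A Z'" and h': "h' \<in> hom C Z' B"
    and be: "b = Comp C h' g'" using b bh unfolding zero_mor_def by (auto simp: hom_def)
  have ZO: "Z' \<in> Obj C" using Z' unfolding zero_obj_def terminal_obj_def by auto
  obtain i where i: "i \<in> hom C Z Z'" using Z ZO unfolding zero_obj_def initial_obj_def by blast
  have AO: "A \<in> Obj C" using dom_obj[OF C g] .
  have BO: "B \<in> Obj C" using cod_obj[OF C h] .
  have ig: "Comp C i g \<in> hom C A Z'" using comp_in[OF C g i] .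
  have e1: "g' = Comp C i g" using Z' AO ig g' unfolding zero_obj_def terminal_obj_def by blast
  have hi: "Comp C h' i \<in> hom C Z B" using comp_in[OF C i h'] .
  have e2: "h = Comp C h' i" using Z BO hi h unfolding zero_obj_def initial_obj_def by blast
  show ?thesis using ae be e1 e2 assoc[OF C g i h'] by simp
qed

lemma zero_comp_right:
  assumes C: "category C" and f: "zero_mor C f" and g: "g \<in> hom C A (Dom C f)"
  shows "zero_mor C (Comp C f g)"
proof -
  obtain Z a b where Z: "zero_obj C Z" and a: "a \<in> hom C (Dom C f) Z" and b: "b \<in> hom C Z (Cod C f)"
    and fe: "f = Comp C b a" using f unfolding zero_mor_def by auto
  have fh: "f \<in> hom C (Dom C f) (Cod C f)" using f by (simp add: zero_mor_def arr_hom)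
  have fg: "Comp C f g \<in> hom C A (Cod C f)" using comp_in[OF C g fh] .
  have ag: "Comp C a g \<in> hom C A Z" using comp_in[OF C g a] .
  have "Comp C f g = Comp C b (Comp C a g)" using fe assoc[OF C g a b] by simp
  moreover have "Dom C (Comp C f g) = A" "Cod C (Comp C f g) = Cod C f" "Comp C f g \<in> Arr C"
    using homD[OF fg] by auto
  ultimately show ?thesis unfolding zero_mor_def using ag b Z by auto
qed

lemma zero_comp_left:
  assumes C: "category C" and f: "zero_mor C f" and g: "g \<in> hom C (Cod C f) B"
  shows "zero_mor C (Comp C g f)"
proof -
  obtain Z a b where Z: "zero_obj C Z" and a: "a \<in> hom C (Dom C f) Z" and b: "b \<in> hom C Z (Cod C f)"
    and fe: "f = Comp C b a" using f unfolding zero_mor_def by auto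
  have fh: "f \<in> hom C (Dom C f) (Cod C f)" using f by (simp add: zero_mor_def arr_hom)
  have fg: "Comp C g f \<in> hom C (Dom C f) B" using comp_in[OF C fh g] .
  have bg: "Comp C g b \<in> hom C Z B" using comp_in[OF C b g] .
  have "Comp C g f = Comp C (Comp C g b) a" using fe assoc[OF C a b g] by simp
  moreover have "Dom C (Comp C g f) = Dom C f" "Cod C (Comp C g f) = B" "Comp C g f \<in> Arr C"
    using homD[OF fg] by auto
  ultimately show ?thesis unfolding zero_mor_def using bg a Z by auto
qed


lemma pb_univ:
  assumes pb: "is_pullback C f g p q" and u: "u \<in> hom C T (Dom C f)" and v: "v \<in> hom C T (Dom C g)"
    and e: "Comp C f u = Comp C g v"
  shows "\<exists>!h. h \<in> hom C T (Dom C p) \<and> Comp C p h = u \<and> Comp C q h = v"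
proof -
  have all: "\<forall>u \<in> Arr C. \<forall>v \<in> Arr C. Dom C u = Dom C v \<and> Cod C u = Dom C f \<and> Cod C v = Dom C g \<and>
        Comp C f u = Comp C g v \<longrightarrow>
        (\<exists>!h. h \<in> hom C (Dom C u) (Dom C p) \<and> Comp C p h = u \<and> Comp C q h = v)"
    using pb unfolding is_pullback_def by blast
  have ua: "u \<in> Arr C" "Dom C u = T" "Cod C u = Dom C f" using u by (auto simp: hom_def)
  have va: "v \<in> Arr C" "Dom C v = T" "Cod C v = Dom C g" using v by (auto simp: hom_def)
  show ?thesis using all[rule_format, OF ua(1) va(1)] ua va e by simp
qed

lemma prod_univ:
  assumes pr: "is_product C A B p q" and u: "u \<in> hom C T A" and v: "v \<in> hom C T B"
  shows "\<exists>!h. h \<in> hom C T (Dom C p) \<and> Comp C p h = u \<and> Comp C q h = v"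
proof -
  have all: "\<forall>u \<in> Arr C. \<forall>v \<in> Arr C. Dom C u = Dom C v \<and> Cod C u = A \<and> Cod C v = B \<longrightarrow>
        (\<exists>!h. h \<in> hom C (Dom C u) (Dom C p) \<and> Comp C p h = u \<and> Comp C q h = v)"
    using pr unfolding is_product_def by blast
  have ua: "u \<in> Arr C" "Dom C u = T" "Cod C u = A" using u by (auto simp: hom_def)
  have va: "v \<in> Arr C" "Dom C v = T" "Cod C v = B" using v by (auto simp: hom_def)
  show ?thesis using all[rule_format, OF ua(1) va(1)] ua va by simp
qed

lemma pb_exists:
  assumes "is_pullback C f g p q" "u \<in> hom C T (Dom C f)" "v \<in> hom C T (Dom C g)"
    "Comp C f u = Comp C g v"
  shows "\<exists>h \<in> hom C T (Dom C p). Comp C p h = u \<and> Comp C q h = v"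
  using pb_univ[OF assms] by blast

lemma pb_data:
  assumes "is_pullback C f g p q"
  shows "p \<in> hom C (Dom C p) (Dom C f)" "q \<in> hom C (Dom C p) (Dom C g)"
    "f \<in> hom C (Dom C f) (Cod C f)" "g \<in> hom C (Dom C g) (Cod C f)" "Comp C f p = Comp C g q"
  using assms unfolding is_pullback_def hom_def by auto

lemma pb_unique:
  assumes C: "category C" and pb: "is_pullback C f g p q"
    and h1: "h1 \<in> hom C T (Dom C p)" and h2: "h2 \<in> hom C T (Dom C p)"
    and e1: "Comp C p h1 = Comp C p h2" and e2: "Comp C q h1 = Comp C q h2"
  shows "h1 = h2"
proof -
  note d = pb_data[OF pb]
  have u: "Comp C p h1 \<in> hom C T (Dom C f)" using comp_in[OF C h1 d(1)] .
  have v: "Comp C q h1 \<in> hom C T (Dom C g)" using comp_in[OF C h1 d(2)] .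
  have "Comp C f (Comp C p h1) = Comp C g (Comp C q h1)"
    using assoc[OF C h1 d(1) d(3)] assoc[OF C h1 d(2) d(4)] d(5) by simp
  from pb_univ[OF pb u v this] show ?thesis using h1 h2 e1 e2 by auto
qed

lemma prod_exists:
  assumes "is_product C A B p q" "u \<in> hom C T A" "v \<in> hom C T B"
  shows "\<exists>h \<in> hom C T (Dom C p). Comp C p h = u \<and> Comp C q h = v"
  using prod_univ[OF assms] by blast

lemma prod_data:
  assumes "is_product C A B p q"
  shows "p \<in> hom C (Dom C p) A" "q \<in> hom C (Dom C p) B"
  using assms unfolding is_product_def hom_def by auto

lemma prod_unique:
  assumes C: "category C" and pr: "is_product C A B p q"
    and h1: "h1 \<in> hom C T (Dom C p)" and h2: "h2 \<in> hom C T (Dom C p)"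
    and e1: "Comp C p h1 = Comp C p h2" and e2: "Comp C q h1 = Comp C q h2"
  shows "h1 = h2"
proof -
  note d = prod_data[OF pr]
  have u: "Comp C p h1 \<in> hom C T A" using comp_in[OF C h1 d(1)] .
  have v: "Comp C q h1 \<in> hom C T B" using comp_in[OF C h1 d(2)] .
  from prod_univ[OF pr u v] show ?thesis using h1 h2 e1 e2 by auto
qed


lemma product_exists:
  assumes C: "category C" and fl: "has_finite_limits C" and A: "A \<in> Obj C" and B: "B \<in> Obj C"
  shows "\<exists>p q. is_product C A B p q"
proof -
  obtain T where T: "terminal_obj C T" using fl unfolding has_finite_limits_def by auto
  obtain a where a: "a \<in> hom C A T" using T A unfolding terminal_obj_def by blast
  obtain b where b: "b \<in> hom C B T" using T B unfolding terminal_obj_def by blast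
  have pbs: "\<forall>f \<in> Arr C. \<forall>g \<in> Arr C. Cod C f = Cod C g \<longrightarrow> (\<exists>p q. is_pullback C f g p q)"
    using fl unfolding has_finite_limits_def by blast
  have "a \<in> Arr C" "b \<in> Arr C" "Cod C a = Cod C b" using a b by (auto simp: hom_def)
  then obtain p q where pb: "is_pullback C a b p q" using pbs by blast
  note d = pb_data[OF pb]
  have da: "Dom C a = A" and db: "Dom C b = B" using a b by (auto simp: hom_def)
  have "is_product C A B p q"
    unfolding is_product_def
  proof (intro conjI ballI impI)
    fix u v assume u: "u \<in> Arr C" and v: "v \<in> Arr C"
      and uv: "Dom C u = Dom C v \<and> Cod C u = A \<and> Cod C v = B"
    have uh: "u \<in> hom C (Dom C u) A" using u uv by (simp add: hom_def)
    have vh: "v \<in> hom C (Dom C u) B" using v uv by (simp add: hom_def)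
    have "Dom C u \<in> Obj C" using dom_obj[OF C uh] .
    moreover have "Comp C a u \<in> hom C (Dom C u) T" using comp_in[OF C uh a] .
    moreover have "Comp C b v \<in> hom C (Dom C u) T" using comp_in[OF C vh b] .
    ultimately have "Comp C a u = Comp C b v" using T unfolding terminal_obj_def by blast
    thus "\<exists>!h. h \<in> hom C (Dom C u) (Dom C p) \<and> Comp C p h = u \<and> Comp C q h = v"
      using pb_univ[OF pb] uh vh da db by simp
  qed (use A B d da db in \<open>simp_all add: hom_def\<close>)
  thus ?thesis by blast
qed

lemma kernel_data:
  assumes "is_kernel C k f"
  shows "k \<in> hom C (Dom C k) (Dom C f)" "f \<in> hom C (Dom C f) (Cod C f)" "zero_mor C (Comp C f k)"
  using assms unfolding is_kernel_def hom_def by auto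

lemma kernel_univ:
  assumes ker: "is_kernel C k f" and g: "g \<in> hom C T (Dom C f)" and z: "zero_mor C (Comp C f g)"
  shows "\<exists>!h. h \<in> hom C T (Dom C k) \<and> Comp C k h = g"
proof -
  have all: "\<forall>g \<in> Arr C. Cod C g = Dom C f \<and> zero_mor C (Comp C f g) \<longrightarrow>
        (\<exists>!h. h \<in> hom C (Dom C g) (Dom C k) \<and> Comp C k h = g)"
    using ker unfolding is_kernel_def by blast
  have ga: "g \<in> Arr C" "Dom C g = T" "Cod C g = Dom C f" using g by (auto simp: hom_def)
  show ?thesis using all[rule_format, OF ga(1)] ga z by simp
qed

lemma kernel_factor:
  assumes "is_kernel C k f" "g \<in> hom C T (Dom C f)" "zero_mor C (Comp C f g)"
  shows "\<exists>h \<in> hom C T (Dom C k). Comp C k h = g"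
  using kernel_univ[OF assms] by blast

lemma kernel_mono:
  assumes C: "category C" and ker: "is_kernel C k f"
    and a: "a \<in> hom C T (Dom C k)" and b: "b \<in> hom C T (Dom C k)" and e: "Comp C k a = Comp C k b"
  shows "a = b"
proof -
  note d = kernel_data[OF ker]
  have ka: "Comp C k a \<in> hom C T (Dom C f)" using comp_in[OF C a d(1)] .
  have fk: "Comp C f k \<in> hom C (Dom C k) (Cod C f)" using comp_in[OF C d(1) d(2)] .
  have "zero_mor C (Comp C (Comp C f k) a)" using zero_comp_right[OF C d(3)] a fk by (simp add: hom_def)
  hence zz: "zero_mor C (Comp C f (Comp C k a))" using assoc[OF C a d(1) d(2)] by simp
  from kernel_univ[OF ker ka zz] show ?thesis using a b e by auto
qed

lemma kernel_intro:
  assumes C: "category C" and k: "k \<in> hom C K A" and f: "f \<in> hom C A B"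
    and z: "zero_mor C (Comp C f k)"
    and ex: "\<And>g T. g \<in> hom C T A \<Longrightarrow> zero_mor C (Comp C f g) \<Longrightarrow> \<exists>h \<in> hom C T K. Comp C k h = g"
    and un: "\<And>a b T. a \<in> hom C T K \<Longrightarrow> b \<in> hom C T K \<Longrightarrow> Comp C k a = Comp C k b \<Longrightarrow> a = b"
  shows "is_kernel C k f"
  unfolding is_kernel_def
proof (intro conjI ballI impI)
  fix g assume g: "g \<in> Arr C" and gc: "Cod C g = Dom C f \<and> zero_mor C (Comp C f g)"
  have df: "Dom C f = A" using f by (simp add: hom_def)
  have gh: "g \<in> hom C (Dom C g) A" using g gc df by (simp add: hom_def)
  obtain h where h: "h \<in> hom C (Dom C g) K" "Comp C k h = g" using ex[OF gh] gc by auto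
  have dk: "Dom C k = K" using k by (simp add: hom_def)
  show "\<exists>!h. h \<in> hom C (Dom C g) (Dom C k) \<and> Comp C k h = g"
    unfolding dk using h un by metis
qed (use k f z in \<open>simp_all add: hom_def\<close>)


lemma strong_to_star:
  assumes C: "category C" and pt: "pointed C" and XO: "X \<in> Obj C" and sc: "strong_complete C X"
  shows "complete_star C X"
  unfolding complete_star_def
proof (intro allI impI, elim conjE)
  fix m assume bn: "bourn_normal C m" and dm: "Dom C m = X"
  define Y where "Y = Cod C m"
  obtain R r1 r2 p1 p2 mt where er: "equiv_rel C Y R r1 r2"
    and pr: "is_product C X X p1 p2" and mth0: "mt \<in> hom C (Dom C p1) R"
    and e1: "Comp C r1 mt = Comp C m p1" and e2: "Comp C r2 mt = Comp C m p2"
    and pb: "is_pullback C r1 m mt p1"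
    using bn dm unfolding bourn_normal_def Y_def by blast
  define P where "P = Dom C p1"
  have mt: "mt \<in> hom C P R" using mth0 P_def by simp
  have ma: "m \<in> Arr C" using bn unfolding bourn_normal_def mono_def by blast
  have m: "m \<in> hom C X Y" using ma dm Y_def by (simp add: hom_def)
  have r1: "r1 \<in> hom C R Y" and r2: "r2 \<in> hom C R Y" using er unfolding equiv_rel_def by auto
  have jm: "\<forall>f \<in> Arr C. \<forall>g \<in> Arr C. Cod C f = R \<and> Cod C g = R \<and> Dom C f = Dom C g \<and>
        Comp C r1 f = Comp C r1 g \<and> Comp C r2 f = Comp C r2 g \<longrightarrow> f = g"
    using er unfolding equiv_rel_def by blast
  obtain d where d: "d \<in> hom C Y R" and d1: "Comp C r1 d = Idm C Y" and d2: "Comp C r2 d = Idm C Y"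
    using er unfolding equiv_rel_def by blast
  have p1: "p1 \<in> hom C P X" and p2: "p2 \<in> hom C P X" using prod_data[OF pr] P_def by auto
  obtain z where z: "z \<in> hom C X X" and zz: "zero_mor C z" using zero_exists[OF C pt XO XO] by blast
  have idX: "Idm C X \<in> hom C X X" using id_in[OF C XO] .
  have YO: "Y \<in> Obj C" using cod_obj[OF C m] .
  obtain i2 where i2: "i2 \<in> hom C X P" and i21: "Comp C p1 i2 = z" and i22: "Comp C p2 i2 = Idm C X"
    using prod_exists[OF pr z idX] P_def by blast
  obtain dl where dl: "dl \<in> hom C X P" and dl1: "Comp C p1 dl = Idm C X" and dl2: "Comp C p2 dl = Idm C X"
    using prod_exists[OF pr idX idX] P_def by blast
  have i2p2: "Comp C i2 (Comp C p2 h) = h" if h: "h \<in> hom C T P" and hz: "zero_mor C (Comp C p1 h)" for h T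
  proof -
    have p2h: "Comp C p2 h \<in> hom C T X" using comp_in[OF C h p2] .
    have a: "Comp C i2 (Comp C p2 h) \<in> hom C T P" using comp_in[OF C p2h i2] .
    have "Comp C p1 (Comp C i2 (Comp C p2 h)) = Comp C z (Comp C p2 h)"
      using assoc[OF C p2h i2 p1] i21 by simp
    moreover have "zero_mor C (Comp C z (Comp C p2 h))"
      using zero_comp_right[OF C zz] p2h z by (simp add: hom_def)
    moreover have "Comp C z (Comp C p2 h) \<in> hom C T X" using comp_in[OF C p2h z] .
    moreover have "Comp C p1 h \<in> hom C T X" using comp_in[OF C h p1] .
    ultimately have q1: "Comp C p1 (Comp C i2 (Comp C p2 h)) = Comp C p1 h"
      using zero_unique[OF C _ hz] by metis
    have q2: "Comp C p2 (Comp C i2 (Comp C p2 h)) = Comp C p2 h"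
      using assoc[OF C p2h i2 p2] i22 id_left[OF C p2h] by simp
    show ?thesis using prod_unique[OF C pr _ _ q1 q2] a h P_def by simp
  qed
  have i2mono: "a = b" if a: "a \<in> hom C T X" and b: "b \<in> hom C T X" and e: "Comp C i2 a = Comp C i2 b" for a b T
  proof -
    have "a = Comp C (Comp C p2 i2) a" using i22 id_left[OF C a] by simp
    also have "\<dots> = Comp C p2 (Comp C i2 a)" using assoc[OF C a i2 p2] by simp
    also have "\<dots> = Comp C p2 (Comp C i2 b)" using e by simp
    also have "\<dots> = Comp C (Comp C p2 i2) b" using assoc[OF C b i2 p2] by simp
    also have "\<dots> = b" using i22 id_left[OF C b] by simp
    finally show ?thesis .
  qed
  have p1i2z: "zero_mor C (Comp C p1 (Comp C i2 a))" "Comp C p1 (Comp C i2 a) \<in> hom C T X"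
    if a: "a \<in> hom C T X" for a T
  proof -
    have "Comp C p1 (Comp C i2 a) = Comp C z a" using assoc[OF C a i2 p1] i21 by simp
    moreover have "zero_mor C (Comp C z a)" using zero_comp_right[OF C zz] a z by (simp add: hom_def)
    ultimately show "zero_mor C (Comp C p1 (Comp C i2 a))" by simp
    show "Comp C p1 (Comp C i2 a) \<in> hom C T X" using comp_in[OF C comp_in[OF C a i2] p1] .
  qed
  have keri2: "is_kernel C i2 p1"
  proof (rule kernel_intro[OF C i2 p1])
    show "zero_mor C (Comp C p1 i2)" using i21 zz by simp
  next
    fix g T assume g: "g \<in> hom C T P" and gz: "zero_mor C (Comp C p1 g)"
    show "\<exists>h\<in>hom C T X. Comp C i2 h = g" using i2p2[OF g gz] comp_in[OF C g p2] by blast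
  next
    fix a b T assume "a \<in> hom C T X" "b \<in> hom C T X" "Comp C i2 a = Comp C i2 b"
    thus "a = b" by (rule i2mono)
  qed
  have "split_epi C p1" unfolding split_epi_def using p1 dl dl1 by (auto simp: hom_def)
  hence psi2: "protosplit_mono C i2" using keri2 unfolding protosplit_mono_def by blast
  define k where "k = Comp C mt i2"
  have k: "k \<in> hom C X R" unfolding k_def using comp_in[OF C i2 mt] .
  have kerk: "is_kernel C k r1"
  proof (rule kernel_intro[OF C k r1])
    have "Comp C r1 k = Comp C (Comp C m p1) i2" unfolding k_def using assoc[OF C i2 mt r1] e1 by simp
    also have "\<dots> = Comp C m z" using assoc[OF C i2 p1 m] i21 by simp
    finally show "zero_mor C (Comp C r1 k)" using zero_comp_left[OF C zz] m z by (simp add: hom_def)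
  next
    fix g T assume g: "g \<in> hom C T R" and gz: "zero_mor C (Comp C r1 g)"
    have TO: "T \<in> Obj C" using dom_obj[OF C g] .
    obtain zT where zT: "zT \<in> hom C T X" and zTz: "zero_mor C zT" using zero_exists[OF C pt TO XO] by blast
    have "zero_mor C (Comp C m zT)" using zero_comp_left[OF C zTz] zT m by (simp add: hom_def)
    hence eq: "Comp C r1 g = Comp C m zT"
      using zero_unique[OF C gz _ comp_in[OF C g r1] comp_in[OF C zT m]] by simp
    have gR: "g \<in> hom C T (Dom C r1)" and zX: "zT \<in> hom C T (Dom C m)"
      using g zT r1 m by (simp_all add: hom_def)
    obtain h where h0: "h \<in> hom C T (Dom C mt)" and h1: "Comp C mt h = g" and h2: "Comp C p1 h = zT"
      using pb_exists[OF pb gR zX eq] by blast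
    have h: "h \<in> hom C T P" using h0 mt by (simp add: hom_def)
    have "Comp C i2 (Comp C p2 h) = h" using i2p2[OF h] h2 zTz by simp
    hence "Comp C k (Comp C p2 h) = g" unfolding k_def
      using assoc[OF C comp_in[OF C h p2] i2 mt] h1 by simp
    thus "\<exists>h\<in>hom C T X. Comp C k h = g" using comp_in[OF C h p2] by blast
  next
    fix a b T assume a: "a \<in> hom C T X" and b: "b \<in> hom C T X" and e: "Comp C k a = Comp C k b"
    have ia: "Comp C i2 a \<in> hom C T (Dom C mt)" and ib: "Comp C i2 b \<in> hom C T (Dom C mt)"
      using comp_in[OF C a i2] comp_in[OF C b i2] mt by (simp_all add: hom_def)
    have q1: "Comp C mt (Comp C i2 a) = Comp C mt (Comp C i2 b)"
      using e unfolding k_def using assoc[OF C a i2 mt] assoc[OF C b i2 mt] by simp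
    have q2: "Comp C p1 (Comp C i2 a) = Comp C p1 (Comp C i2 b)"
      using zero_unique[OF C p1i2z(1)[OF a] p1i2z(1)[OF b] p1i2z(2)[OF a] p1i2z(2)[OF b]] .
    have "Comp C i2 a = Comp C i2 b" using pb_unique[OF C pb ia ib q1 q2] .
    thus "a = b" using i2mono[OF a b] by simp
  qed
  have "split_epi C r1" unfolding split_epi_def using r1 d d1 by (auto simp: hom_def)
  hence psk: "protosplit_mono C k" using kerk unfolding protosplit_mono_def by blast
  have dk: "Dom C k = X" and ck: "Cod C k = R" and di2: "Dom C i2 = X" and ci2: "Cod C i2 = P"
    using k i2 by (simp_all add: hom_def)
  obtain rho where rho: "rho \<in> hom C R X" and rk: "Comp C rho k = Idm C X"
    using sc psk dk ck unfolding strong_complete_def by blast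
  have uq: "\<exists>!r. r \<in> hom C P X \<and> Comp C r i2 = Idm C X"
    using sc psi2 di2 ci2 unfolding strong_complete_def by blast
  have rm: "Comp C rho mt \<in> hom C P X" using comp_in[OF C mt rho] .
  have "Comp C (Comp C rho mt) i2 = Idm C X" using assoc[OF C i2 mt rho] rk k_def by simp
  hence rmp: "Comp C rho mt = p2" using uq rm p2 i22 by blast
  have dm_eq: "Comp C d m = Comp C mt dl"
  proof -
    have a: "Comp C d m \<in> hom C X R" using comp_in[OF C m d] .
    have b: "Comp C mt dl \<in> hom C X R" using comp_in[OF C dl mt] .
    have "Comp C r1 (Comp C d m) = m" using assoc[OF C m d r1] d1 id_left[OF C m] by simp
    moreover have "Comp C r1 (Comp C mt dl) = m"
      using assoc[OF C dl mt r1] e1 assoc[OF C dl p1 m] dl1 id_right[OF C m] by simp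
    moreover have "Comp C r2 (Comp C d m) = m" using assoc[OF C m d r2] d2 id_left[OF C m] by simp
    moreover have "Comp C r2 (Comp C mt dl) = m"
      using assoc[OF C dl mt r2] e2 assoc[OF C dl p2 m] dl2 id_right[OF C m] by simp
    ultimately show ?thesis using jm a b by (simp add: hom_def)
  qed
  have ret: "Comp C rho d \<in> hom C Y X" using comp_in[OF C d rho] .
  have "Comp C (Comp C rho d) m = Comp C rho (Comp C mt dl)" using assoc[OF C m d rho] dm_eq by simp
  also have "\<dots> = Comp C p2 dl" using assoc[OF C dl mt rho] rmp by simp
  finally have "Comp C (Comp C rho d) m = Idm C X" using dl2 by simp
  thus "split_mono C m" unfolding split_mono_def using ma ret dm Y_def by auto
qed


lemma normal_is_bourn:
  assumes C: "category C" and pt: "pointed C" and fl: "has_finite_limits C" and ker: "is_kernel C m f"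
  shows "bourn_normal C m"
proof -
  define X where "X = Dom C m"
  define Y where "Y = Dom C f"
  define W where "W = Cod C f"
  have m: "m \<in> hom C X Y" and f: "f \<in> hom C Y W" and fmz: "zero_mor C (Comp C f m)"
    using kernel_data[OF ker] X_def Y_def W_def by auto
  have cm: "Cod C m = Y" using m by (simp add: hom_def)
  have pbs: "\<forall>f \<in> Arr C. \<forall>g \<in> Arr C. Cod C f = Cod C g \<longrightarrow> (\<exists>p q. is_pullback C f g p q)"
    using fl unfolding has_finite_limits_def by blast
  have fa: "f \<in> Arr C" using f by (simp add: hom_def)
  obtain r1 r2 where kp: "is_pullback C f f r1 r2" using pbs fa by blast
  define R where "R = Dom C r1"
  have r1: "r1 \<in> hom C R Y" and r2: "r2 \<in> hom C R Y" and fr: "Comp C f r1 = Comp C f r2"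
    using pb_data[OF kp] R_def Y_def by auto
  have XO: "X \<in> Obj C" using dom_obj[OF C m] .
  have YO: "Y \<in> Obj C" using cod_obj[OF C m] .
  have RO: "R \<in> Obj C" using dom_obj[OF C r1] .
  obtain p1 p2 where pr: "is_product C X X p1 p2" using product_exists[OF C fl XO XO] by blast
  define P where "P = Dom C p1"
  have p1: "p1 \<in> hom C P X" and p2: "p2 \<in> hom C P X" using prod_data[OF pr] P_def by auto
  have zf: "zero_mor C (Comp C f (Comp C m a))" if a: "a \<in> hom C T X" for a T
  proof -
    have "zero_mor C (Comp C (Comp C f m) a)"
      using zero_comp_right[OF C fmz] a comp_in[OF C m f] by (simp add: hom_def)
    thus ?thesis using assoc[OF C a m f] by simp
  qed
  have mp1: "Comp C m p1 \<in> hom C P Y" using comp_in[OF C p1 m] .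
  have mp2: "Comp C m p2 \<in> hom C P Y" using comp_in[OF C p2 m] .
  have "Comp C f (Comp C m p1) = Comp C f (Comp C m p2)"
    using zero_unique[OF C zf[OF p1] zf[OF p2] comp_in[OF C mp1 f] comp_in[OF C mp2 f]] .
  then obtain mt where mt0: "mt \<in> hom C P (Dom C r1)" and e1: "Comp C r1 mt = Comp C m p1"
    and e2: "Comp C r2 mt = Comp C m p2"
    using pb_exists[OF kp] mp1 mp2 Y_def by blast
  have mt: "mt \<in> hom C P R" using mt0 R_def by simp
  have mmono: "a = b" if "a \<in> hom C T X" "b \<in> hom C T X" "Comp C m a = Comp C m b" for a b T
    using kernel_mono[OF C ker] that X_def by simp
  have jm: "a = b" if a: "a \<in> hom C T R" and b: "b \<in> hom C T R"
     and "Comp C r1 a = Comp C r1 b" "Comp C r2 a = Comp C r2 b" for a b T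
    using pb_unique[OF C kp] that R_def by simp
  have monom: "mono C m" unfolding mono_def
  proof (intro conjI ballI impI)
    show "m \<in> Arr C" using m by (simp add: hom_def)
    fix a b assume a: "a \<in> Arr C" and b: "b \<in> Arr C"
      and c: "Cod C a = Dom C m \<and> Cod C b = Dom C m \<and> Dom C a = Dom C b \<and> Comp C m a = Comp C m b"
    show "a = b" using mmono[of a "Dom C a" b] a b c X_def by (simp add: hom_def)
  qed
  have er: "equiv_rel C Y R r1 r2" unfolding equiv_rel_def
  proof (intro conjI)
    show "Y \<in> Obj C" "R \<in> Obj C" "r1 \<in> hom C R Y" "r2 \<in> hom C R Y" using YO RO r1 r2 by auto
    show "\<forall>fa\<in>Arr C. \<forall>g\<in>Arr C. Cod C fa = R \<and> Cod C g = R \<and> Dom C fa = Dom C g \<and>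
        Comp C r1 fa = Comp C r1 g \<and> Comp C r2 fa = Comp C r2 g \<longrightarrow> fa = g"
    proof (intro ballI impI)
      fix a b assume a: "a \<in> Arr C" and b: "b \<in> Arr C" and c: "Cod C a = R \<and> Cod C b = R \<and> Dom C a = Dom C b \<and>
        Comp C r1 a = Comp C r1 b \<and> Comp C r2 a = Comp C r2 b"
      show "a = b" using jm[of a "Dom C a" b] a b c by (simp add: hom_def)
    qed
    have iY: "Idm C Y \<in> hom C Y (Dom C f)" using id_in[OF C YO] Y_def by simp
    obtain d where "d \<in> hom C Y (Dom C r1)" "Comp C r1 d = Idm C Y" "Comp C r2 d = Idm C Y"
      using pb_exists[OF kp iY iY] by blast
    thus "\<exists>d\<in>hom C Y R. Comp C r1 d = Idm C Y \<and> Comp C r2 d = Idm C Y" using R_def by blast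
    have r1': "r1 \<in> hom C R (Dom C f)" and r2': "r2 \<in> hom C R (Dom C f)" using r1 r2 Y_def by auto
    obtain sg where "sg \<in> hom C R (Dom C r1)" "Comp C r1 sg = r2" "Comp C r2 sg = r1"
      using pb_exists[OF kp r2' r1' fr[symmetric]] by blast
    thus "\<exists>\<sigma>\<in>hom C R R. Comp C r1 \<sigma> = r2 \<and> Comp C r2 \<sigma> = r1" using R_def by blast
    show "\<forall>q1 q2. is_pullback C r2 r1 q1 q2 \<longrightarrow>
        (\<exists>\<tau>\<in>hom C (Dom C q1) R. Comp C r1 \<tau> = Comp C r1 q1 \<and> Comp C r2 \<tau> = Comp C r2 q2)"
    proof (intro allI impI)
      fix q1 q2 assume tp: "is_pullback C r2 r1 q1 q2"
      define Q where "Q = Dom C q1"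
      have dr2: "Dom C r2 = R" using r2 by (simp add: hom_def)
      have q1: "q1 \<in> hom C Q R" and q2: "q2 \<in> hom C Q R" and sq: "Comp C r2 q1 = Comp C r1 q2"
        using pb_data[OF tp] Q_def dr2 R_def by auto
      have u: "Comp C r1 q1 \<in> hom C Q (Dom C f)" using comp_in[OF C q1 r1] Y_def by simp
      have v: "Comp C r2 q2 \<in> hom C Q (Dom C f)" using comp_in[OF C q2 r2] Y_def by simp
      have "Comp C f (Comp C r1 q1) = Comp C (Comp C f r2) q1" using assoc[OF C q1 r1 f] fr by simp
      also have "\<dots> = Comp C f (Comp C r1 q2)" using assoc[OF C q1 r2 f] sq by simp
      also have "\<dots> = Comp C (Comp C f r2) q2" using assoc[OF C q2 r1 f] fr by simp
      also have "\<dots> = Comp C f (Comp C r2 q2)" using assoc[OF C q2 r2 f] by simp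
      finally have "Comp C f (Comp C r1 q1) = Comp C f (Comp C r2 q2)" .
      from pb_exists[OF kp u v this]
      show "\<exists>\<tau>\<in>hom C (Dom C q1) R. Comp C r1 \<tau> = Comp C r1 q1 \<and> Comp C r2 \<tau> = Comp C r2 q2"
        using Q_def R_def by blast
    qed
  qed
  have pbm: "is_pullback C r1 m mt p1" unfolding is_pullback_def
  proof (intro conjI ballI impI)
    show "r1 \<in> Arr C" "m \<in> Arr C" "mt \<in> Arr C" "p1 \<in> Arr C" "Cod C r1 = Cod C m"
      "Dom C mt = Dom C p1" "Cod C mt = Dom C r1" "Cod C p1 = Dom C m" "Comp C r1 mt = Comp C m p1"
      using r1 m mt p1 e1 P_def R_def X_def by (auto simp: hom_def)
    fix u v assume ua: "u \<in> Arr C" and va: "v \<in> Arr C"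
      and c: "Dom C u = Dom C v \<and> Cod C u = Dom C r1 \<and> Cod C v = Dom C m \<and> Comp C r1 u = Comp C m v"
    define T where "T = Dom C u"
    have u: "u \<in> hom C T R" and v: "v \<in> hom C T X" and e: "Comp C r1 u = Comp C m v"
      using ua va c T_def R_def X_def by (auto simp: hom_def)
    have r2u: "Comp C r2 u \<in> hom C T (Dom C f)" using comp_in[OF C u r2] Y_def by simp
    have "Comp C f (Comp C r2 u) = Comp C (Comp C f r1) u" using assoc[OF C u r2 f] fr by simp
    also have "\<dots> = Comp C f (Comp C m v)" using assoc[OF C u r1 f] e by simp
    finally have "zero_mor C (Comp C f (Comp C r2 u))" using zf[OF v] by simp
    then obtain w where w: "w \<in> hom C T X" and mw: "Comp C m w = Comp C r2 u"
      using kernel_factor[OF ker r2u] X_def by blast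
    obtain h where h: "h \<in> hom C T P" and h1: "Comp C p1 h = v" and h2: "Comp C p2 h = w"
      using prod_exists[OF pr v w] P_def by blast
    have mth: "Comp C mt h = u"
    proof (rule jm[OF comp_in[OF C h mt] u])
      show "Comp C r1 (Comp C mt h) = Comp C r1 u" using assoc[OF C h mt r1] e1 assoc[OF C h p1 m] h1 e by simp
      show "Comp C r2 (Comp C mt h) = Comp C r2 u" using assoc[OF C h mt r2] e2 assoc[OF C h p2 m] h2 mw by simp
    qed
    have dmt: "Dom C mt = P" using mt by (simp add: hom_def)
    show "\<exists>!h. h \<in> hom C (Dom C u) (Dom C mt) \<and> Comp C mt h = u \<and> Comp C p1 h = v"
    proof (rule ex1I[of _ h])
      show "h \<in> hom C (Dom C u) (Dom C mt) \<and> Comp C mt h = u \<and> Comp C p1 h = v"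
        using h mth h1 dmt T_def by simp
      fix h' assume "h' \<in> hom C (Dom C u) (Dom C mt) \<and> Comp C mt h' = u \<and> Comp C p1 h' = v"
      hence h': "h' \<in> hom C T P" and h'1: "Comp C mt h' = u" and h'2: "Comp C p1 h' = v"
        using dmt T_def by auto
      have "Comp C m (Comp C p2 h') = Comp C r2 (Comp C mt h')"
        using assoc[OF C h' p2 m] assoc[OF C h' mt r2] e2 by simp
      hence "Comp C m (Comp C p2 h') = Comp C m w" using h'1 mw by simp
      hence "Comp C p2 h' = w" using mmono[OF comp_in[OF C h' p2] w] by simp
      thus "h' = h" using prod_unique[OF C pr] h' h h'2 h1 h2 P_def by simp
    qed
  qed
  show ?thesis unfolding bourn_normal_def
    using monom er pr mt0 e1 e2 pbm cm P_def R_def X_def by blast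
qed


theorem proposition4p7:
  fixes C :: "('o, 'a) cat" and X :: 'o
  assumes "category C" and "pointed C" and "has_finite_limits C" and "protomodular C"
    and "X \<in> Obj C"
  shows "(strong_complete C X \<longrightarrow> complete_star C X) \<and>
         (complete_star C X \<longrightarrow> complete C X) \<and>
         (complete C X \<longrightarrow> proto_complete C X)"
proof (intro conjI impI)
  assume "strong_complete C X"
  thus "complete_star C X" by (rule strong_to_star[OF assms(1) assms(2) assms(5)])
next
  assume cs: "complete_star C X"
  show "complete C X" unfolding complete_def
  proof (intro allI impI, elim conjE)
    fix m assume "normal_mono C m" "Dom C m = X"
    then obtain f where "is_kernel C m f" unfolding normal_mono_def by blast
    hence "bourn_normal C m" by (rule normal_is_bourn[OF assms(1) assms(2) assms(3)])
    thus "split_mono C m" using cs \<open>Dom C m = X\<close> unfolding complete_star_def by blast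
  qed
next
  assume "complete C X"
  hence cc: "\<And>m. normal_mono C m \<Longrightarrow> Dom C m = X \<Longrightarrow> split_mono C m" unfolding complete_def by blast
  show "proto_complete C X" unfolding proto_complete_def
  proof (intro allI impI, elim conjE)
    fix m assume "protosplit_mono C m" "Dom C m = X"
    then obtain p where "is_kernel C m p" unfolding protosplit_mono_def by blast
    hence "normal_mono C m" unfolding normal_mono_def by blast
    thus "split_mono C m" using cc \<open>Dom C m = X\<close> by blast
  qed
qed

end
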